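(* Let $1\ge\Delta^{-1},q\gg L^{-1}\gg n^{-1}$. Let $G$ be a $q$-cut-dense graph of order $n$, let $v\in V(G)$ and let $U\subseteq V(G)$ with $|U|\ge L$. Then $G$ contains, as a subgraph, a perfect $\Delta$-ary tree of height at most $19q^{-4}$ rooted at $v$ with all its leaves in $U$.
   Context: A graph $G$ is $q$-cut-dense if for every partition $V(G)=A\cup B$ into disjoint sets, the number of edges between $A$ and $B$ is at least $q|A||B|$. A $\Delta$-ary tree is one in which every non-leaf vertex has degree $\Delta$; a perfect $\Delta$-ary tree of height $h$ has a designated root with every leaf at distance $h$ from the root. The hierarchy means: given $\Delta$ and $q$, $L$ is sufficiently large, and given $L$, $n$ is sufficiently large. *)

theory Defs
  imports Complex_Main
begin

definition simple_graph :: "'a set \<Rightarrow> ('a \<Rightarrow> 'a \<Rightarrow> bool) \<Rightarrow> bool" where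
  "simple_graph V E \<longleftrightarrow> finite V \<and>
     (\<forall>x y. E x y \<longrightarrow> x \<in> V \<and> y \<in> V) \<and>
     (\<forall>x y. E x y \<longrightarrow> E y x) \<and> (\<forall>x. \<not> E x x)"

definition e_between :: "('a \<Rightarrow> 'a \<Rightarrow> bool) \<Rightarrow> 'a set \<Rightarrow> 'a set \<Rightarrow> nat" where
  "e_between E A B = card {(a, b). a \<in> A \<and> b \<in> B \<and> E a b}"

definition cut_dense :: "'a set \<Rightarrow> ('a \<Rightarrow> 'a \<Rightarrow> bool) \<Rightarrow> real \<Rightarrow> bool" where
  "cut_dense V E q \<longleftrightarrow>
     (\<forall>A B. A \<union> B = V \<and> A \<inter> B = {} \<longrightarrow>
        real (e_between E A B) \<ge> q * real (card A) * real (card B))"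

text \<open>The tree is given by its vertex set T \<subseteq> V, a parent map par (tree edges
  are {x, par x} for x \<in> T - {v}, which must be edges of G) and a depth map dep.
  Non-leaf vertices (depth < h) have degree \<Delta> in the tree: the root has \<Delta> children,
  other non-leaf vertices have \<Delta>-1 children plus their parent.\<close>
definition perfect_tree_in ::
  "'a set \<Rightarrow> ('a \<Rightarrow> 'a \<Rightarrow> bool) \<Rightarrow> nat \<Rightarrow> nat \<Rightarrow> 'a \<Rightarrow> 'a set
   \<Rightarrow> 'a set \<Rightarrow> ('a \<Rightarrow> 'a) \<Rightarrow> ('a \<Rightarrow> nat) \<Rightarrow> bool" where
  "perfect_tree_in V E \<Delta> h v U T par dep \<longleftrightarrow>
     T \<subseteq> V \<and> v \<in> T \<and> dep v = 0 \<and>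
     (\<forall>x\<in>T. dep x \<le> h) \<and>
     (\<forall>x\<in>T - {v}. par x \<in> T \<and> dep x = dep (par x) + 1 \<and> E x (par x)) \<and>
     (\<forall>x\<in>T. dep x < h \<longrightarrow>
        card {y \<in> T - {v}. par y = x} = (if x = v then \<Delta> else \<Delta> - 1)) \<and>
     (\<forall>x\<in>T. dep x = h \<longrightarrow> x \<in> U)"

end

theory Submission
  imports Defs
begin


definition subtr :: "'a set \<Rightarrow> ('a \<Rightarrow> 'a \<Rightarrow> bool) \<Rightarrow> nat \<Rightarrow> nat \<Rightarrow> nat \<Rightarrow> 'a \<Rightarrow> 'a set
   \<Rightarrow> 'a set \<Rightarrow> ('a \<Rightarrow> 'a) \<Rightarrow> ('a \<Rightarrow> nat) \<Rightarrow> bool" where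
  "subtr V E D h r v U T par dep \<longleftrightarrow>
     T \<subseteq> V \<and> v \<in> T \<and> dep v = 0 \<and>
     (\<forall>x\<in>T. dep x \<le> h) \<and>
     (\<forall>x\<in>T - {v}. par x \<in> T \<and> dep x = dep (par x) + 1 \<and> E x (par x)) \<and>
     (\<forall>x\<in>T. dep x < h \<longrightarrow>
        card {y \<in> T - {v}. par y = x} = (if x = v then r else D - 1)) \<and>
     (\<forall>x\<in>T. dep x = h \<longrightarrow> x \<in> U)"

lemma subtr_base:
  assumes "x \<in> U" "U \<subseteq> V"
  shows "subtr V E D 0 r x U {x} par (\<lambda>_. 0)"
  using assms unfolding subtr_def by auto

lemma subtr_zero:
  assumes "x \<in> V"
  shows "subtr V E D (Suc k) 0 x U {x} par (\<lambda>_. 0)"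
  using assms unfolding subtr_def by auto

lemma subtr_comb:
  assumes symE: "\<forall>a b. E a b \<longrightarrow> E b a"
    and T1: "subtr V E D (Suc k) r x U T par dep" and fT: "finite T"
    and T2: "subtr V E D k (D - 1) y U T' par' dep'" and fT': "finite T'"
    and disj: "T \<inter> T' = {}" and exy: "E x y"
  shows "subtr V E D (Suc k) (Suc r) x U (T \<union> T')
     (\<lambda>z. if z \<in> T' then (if z = y then x else par' z) else par z)
     (\<lambda>z. if z \<in> T' then Suc (dep' z) else dep z)"
proof -
  define par'' where "par'' = (\<lambda>z. if z \<in> T' then (if z = y then x else par' z) else par z)"
  define dep'' where "dep'' = (\<lambda>z. if z \<in> T' then Suc (dep' z) else dep z)"
  have xT: "x \<in> T" and yT': "y \<in> T'" using T1 T2 unfolding subtr_def by auto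
  have xT': "x \<notin> T'" and yT: "y \<notin> T" using disj xT yT' by auto
  have ch: "card {z \<in> (T \<union> T') - {x}. par'' z = w} = (if w = x then Suc r else D - 1)"
    if w: "w \<in> T \<union> T'" "dep'' w < Suc k" for w
  proof (cases "w \<in> T")
    case True
    have eq: "{z \<in> (T \<union> T') - {x}. par'' z = w} = {z \<in> T - {x}. par z = w} \<union> (if w = x then {y} else {})"
    proof -
      have "par'' z \<noteq> w" if "z \<in> T'" "z \<noteq> y" for z
        using T2 that True disj unfolding subtr_def par''_def by auto
      then show ?thesis using True xT' yT' yT xT disj unfolding par''_def by auto
    qed
    have "w \<notin> T'" using True disj by auto
    then have dw: "dep w < Suc k" using w unfolding dep''_def by auto
    show ?thesis
    proof (cases "w = x")
      case True
      then have "card {z \<in> T - {x}. par z = w} = r" using T1 dw xT unfolding subtr_def by auto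
      moreover have "finite {z \<in> T - {x}. par z = w}" using fT by auto
      ultimately show ?thesis using eq True yT by (simp add: card_insert_if)
    next
      case False
      then show ?thesis using eq T1 dw \<open>w \<in> T\<close> unfolding subtr_def by auto
    qed
  next
    case False
    then have wT': "w \<in> T'" using w by auto
    have eq: "{z \<in> (T \<union> T') - {x}. par'' z = w} = {z \<in> T' - {y}. par' z = w}"
    proof -
      have "par z \<noteq> w" if "z \<in> T" "z \<noteq> x" for z
        using T1 that wT' disj unfolding subtr_def by auto
      then show ?thesis using wT' xT' yT' yT xT disj unfolding par''_def by auto
    qed
    have dw: "dep' w < k" using w wT' unfolding dep''_def by auto
    have "w \<noteq> x" using wT' xT' by auto
    then show ?thesis using eq T2 dw wT' unfolding subtr_def by auto
  qed
  have "subtr V E D (Suc k) (Suc r) x U (T \<union> T') par'' dep''"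
    unfolding subtr_def
  proof (intro conjI)
    show "T \<union> T' \<subseteq> V" using T1 T2 unfolding subtr_def by auto
    show "x \<in> T \<union> T'" using xT by auto
    show "dep'' x = 0" using T1 xT' unfolding subtr_def dep''_def by auto
    show "\<forall>z\<in>T \<union> T'. dep'' z \<le> Suc k" using T1 T2 unfolding subtr_def dep''_def by auto
    show "\<forall>z\<in>T \<union> T' - {x}. par'' z \<in> T \<union> T' \<and> dep'' z = dep'' (par'' z) + 1 \<and> E z (par'' z)"
    proof
      fix z assume z: "z \<in> T \<union> T' - {x}"
      show "par'' z \<in> T \<union> T' \<and> dep'' z = dep'' (par'' z) + 1 \<and> E z (par'' z)"
      proof (cases "z \<in> T'")
        case True
        show ?thesis
        proof (cases "z = y")
          case True
          then show ?thesis using xT xT' yT' T1 T2 symE exy unfolding subtr_def par''_def dep''_def by auto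
        next
          case False
          then show ?thesis using \<open>z \<in> T'\<close> T2 unfolding subtr_def par''_def dep''_def by auto
        qed
      next
        case False
        then have "z \<in> T - {x}" using z by auto
        then have "par z \<in> T" using T1 unfolding subtr_def by auto
        then have "par z \<notin> T'" using disj by auto
        then show ?thesis using False \<open>z \<in> T - {x}\<close> T1 unfolding subtr_def par''_def dep''_def by auto
      qed
    qed
    show "\<forall>w\<in>T \<union> T'. dep'' w < Suc k \<longrightarrow>
        card {z \<in> T \<union> T' - {x}. par'' z = w} = (if w = x then Suc r else D - 1)"
      using ch by auto
    show "\<forall>z\<in>T \<union> T'. dep'' z = Suc k \<longrightarrow> z \<in> U"
      using T1 T2 unfolding subtr_def dep''_def by auto
  qed
  then show ?thesis unfolding par''_def dep''_def .
qed

definition nb :: "('a \<Rightarrow> 'a \<Rightarrow> bool) \<Rightarrow> 'a \<Rightarrow> 'a set \<Rightarrow> nat" where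
  "nb E x S = card {y \<in> S. E x y}"

fun lev :: "'a set \<Rightarrow> ('a \<Rightarrow> 'a \<Rightarrow> bool) \<Rightarrow> nat \<Rightarrow> 'a set \<Rightarrow> nat \<Rightarrow> 'a set" where
  "lev V E M U 0 = U"
| "lev V E M U (Suc k) = {x \<in> V. M \<le> nb E x (lev V E M U k)}"

lemma lev_sub: "U \<subseteq> V \<Longrightarrow> lev V E M U k \<subseteq> V"
  by (cases k) auto

lemma embed:
  assumes sg: "simple_graph V E" and UV: "U \<subseteq> V" and D1: "D \<ge> 1"
  shows "\<forall>r\<le>D. \<forall>x\<in>lev V E M U k. \<forall>F. finite F \<longrightarrow> x \<notin> F \<longrightarrow> card F + (D+1)^k \<le> M \<longrightarrow>
     (\<exists>T par dep. subtr V E D k r x U T par dep \<and> finite T \<and> T \<inter> F = {} \<and> card T \<le> (D+1)^k)"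
proof (induction k)
  case 0
  show ?case
  proof (intro allI impI ballI)
    fix r x F assume "x \<in> lev V E M U 0" "x \<notin> F"
    then show "\<exists>T par dep. subtr V E D 0 r x U T par dep \<and> finite T \<and> T \<inter> F = {} \<and> card T \<le> (D+1)^0"
    proof (intro exI conjI)
      show "subtr V E D 0 r x U {x} id (\<lambda>_. 0)" using subtr_base[of x U V E D r] UV \<open>x \<in> lev V E M U 0\<close> by auto
    qed (use \<open>x \<notin> F\<close> in auto)
  qed
next
  case (Suc k)
  note IHk = Suc.IH
  have finV: "finite V" and symE: "\<forall>a b. E a b \<longrightarrow> E b a"
    using sg unfolding simple_graph_def by auto
  define p where "p = (D+1)^k"
  have p1: "1 \<le> p" unfolding p_def by simp
  have pS: "(D+1)^(Suc k) = (D+1) * p" unfolding p_def by simp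
  show ?case
  proof (intro allI impI ballI)
    fix r0 x F assume r0: "r0 \<le> D" and x: "x \<in> lev V E M U (Suc k)" and fF: "finite F"
      and xF: "x \<notin> F" and cF: "card F + (D+1)^(Suc k) \<le> M"
    have xV: "x \<in> V" using x by auto
    have nbx: "M \<le> nb E x (lev V E M U k)" using x by auto
    have main: "r \<le> D \<longrightarrow> (\<exists>T par dep. subtr V E D (Suc k) r x U T par dep \<and> finite T \<and> T \<inter> F = {}
       \<and> card T \<le> 1 + r * p)" for r
    proof (induction r)
      case 0
      show ?case
      proof (intro impI exI conjI)
        show "subtr V E D (Suc k) 0 x U {x} id (\<lambda>_. 0)" using subtr_zero[of x V E D k U] xV by auto
      qed (use xF in auto)
    next
      case (Suc r)
      show ?case
      proof
        assume rD: "Suc r \<le> D"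
        then obtain T par dep where T: "subtr V E D (Suc k) r x U T par dep" "finite T" "T \<inter> F = {}"
          "card T \<le> 1 + r * p" using Suc.IH by auto
        define F' where "F' = F \<union> T"
        have fF': "finite F'" using fF T unfolding F'_def by auto
        have cF': "card F' \<le> card F + 1 + r * p"
          using card_Un_le[of F T] T(4) unfolding F'_def by linarith
        have "1 + r * p < (D+1) * p"
        proof -
          have "(D+1) * p = D * p + p" by simp
          moreover have "(r+1) * p \<le> D * p" using rD by (intro mult_right_mono) auto
          ultimately show ?thesis using p1 by (simp add: algebra_simps)
        qed
        then have ltM: "card F' < M" using cF' cF pS by linarith
        have "\<not> {y \<in> lev V E M U k. E x y} \<subseteq> F'"
        proof
          assume "{y \<in> lev V E M U k. E x y} \<subseteq> F'"
          then have "card {y \<in> lev V E M U k. E x y} \<le> card F'" using fF' by (rule card_mono[rotated])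
          then show False using nbx ltM unfolding nb_def by linarith
        qed
        then obtain y where y: "y \<in> lev V E M U k" "E x y" "y \<notin> F'" by auto
        have "1 + (r+1) * p \<le> (D+1) * p"
        proof -
          have "(D+1) * p = D * p + p" by simp
          moreover have "(r+1) * p \<le> D * p" using rD by (intro mult_right_mono) auto
          ultimately show ?thesis using p1 by (simp add: algebra_simps)
        qed
        then have "card F' + (D+1)^k \<le> M" using cF' cF pS unfolding p_def[symmetric] by (simp add: algebra_simps)
        then obtain T' par' dep' where T': "subtr V E D k (D - 1) y U T' par' dep'" "finite T'" "T' \<inter> F' = {}"
          "card T' \<le> p" using IHk[rule_format, of "D - 1" y F'] y fF' unfolding p_def by auto
        show "\<exists>T par dep. subtr V E D (Suc k) (Suc r) x U T par dep \<and> finite T \<and> T \<inter> F = {}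
       \<and> card T \<le> 1 + Suc r * p"
        proof (intro exI conjI)
          show "subtr V E D (Suc k) (Suc r) x U (T \<union> T')
             (\<lambda>z. if z \<in> T' then (if z = y then x else par' z) else par z)
             (\<lambda>z. if z \<in> T' then Suc (dep' z) else dep z)"
            using subtr_comb[OF symE T(1,2) T'(1,2) _ y(2)] T'(3) unfolding F'_def by auto
          show "finite (T \<union> T')" using T T' by auto
          show "(T \<union> T') \<inter> F = {}" using T T' unfolding F'_def by auto
          have "card (T \<union> T') = card T + card T'"
            using T T' unfolding F'_def by (intro card_Un_disjoint) auto
          then show "card (T \<union> T') \<le> 1 + Suc r * p" using T(4) T'(4) by simp
        qed
      qed
    qed
    obtain T par dep where T: "subtr V E D (Suc k) r0 x U T par dep" "finite T" "T \<inter> F = {}"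
          "card T \<le> 1 + r0 * p" using main r0 by blast
    have "1 + r0 * p \<le> (D+1)^(Suc k)"
    proof -
      have "r0 * p \<le> D * p" using r0 by (intro mult_right_mono) auto
      moreover have "(D+1)^(Suc k) = D * p + p" using pS by simp
      ultimately show ?thesis using p1 by linarith
    qed
    then show "\<exists>T par dep. subtr V E D (Suc k) r0 x U T par dep \<and> finite T \<and> T \<inter> F = {} \<and> card T \<le> (D+1)^(Suc k)"
      using T by (meson order_trans)
  qed
qed



lemma nb_sum: "finite S \<Longrightarrow> nb E x S = (\<Sum>y\<in>S. if E x y then 1 else 0)"
proof -
  assume "finite S"
  then show ?thesis unfolding nb_def card_eq_sum using sum.inter_filter[of S "\<lambda>_. 1::nat" "E x"] by simp
qed

lemma dc: assumes "finite A" "finite B" "\<forall>a b. E a b \<longrightarrow> E b a"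
  shows "(\<Sum>x\<in>A. nb E x B) = (\<Sum>y\<in>B. nb E y A)"
proof -
  have "(\<Sum>x\<in>A. nb E x B) = (\<Sum>x\<in>A. \<Sum>y\<in>B. if E x y then 1 else 0)"
    using assms by (simp add: nb_sum)
  also have "\<dots> = (\<Sum>y\<in>B. \<Sum>x\<in>A. if E x y then 1 else 0)" by (rule sum.swap)
  also have "\<dots> = (\<Sum>y\<in>B. \<Sum>x\<in>A. if E y x then 1 else 0)"
    using assms(3) by (intro sum.cong refl) metis
  also have "\<dots> = (\<Sum>y\<in>B. nb E y A)" using assms by (simp add: nb_sum)
  finally show ?thesis .
qed

lemma eb: assumes "finite A" "finite B"
  shows "e_between E A B = (\<Sum>a\<in>A. nb E a B)"
proof -
  have "{(a, b). a \<in> A \<and> b \<in> B \<and> E a b} = Sigma A (\<lambda>a. {b\<in>B. E a b})" by auto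
  then show ?thesis unfolding e_between_def nb_def using assms by (simp add: card_SigmaI)
qed

lemma nb_split: "finite S \<Longrightarrow> X \<subseteq> S \<Longrightarrow> nb E x S = nb E x X + nb E x (S - X)"
proof -
  assume a: "finite S" "X \<subseteq> S"
  have "{y \<in> S. E x y} = {y \<in> X. E x y} \<union> {y \<in> S - X. E x y}" using a by auto
  moreover have "card ({y \<in> X. E x y} \<union> {y \<in> S - X. E x y}) = card {y \<in> X. E x y} + card {y \<in> S - X. E x y}"
    using a by (intro card_Un_disjoint) (auto intro: finite_subset)
  ultimately show ?thesis unfolding nb_def by simp
qed

lemma nb_le: "finite S \<Longrightarrow> nb E x S \<le> card S"
  unfolding nb_def by (rule card_mono) auto

lemma nb_Un: "finite A \<Longrightarrow> finite B \<Longrightarrow> nb E x (A \<union> B) \<le> nb E x A + nb E x B"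
proof -
  assume "finite A" "finite B"
  have "{y \<in> A \<union> B. E x y} = {y \<in> A. E x y} \<union> {y \<in> B. E x y}" by auto
  then show ?thesis unfolding nb_def by (metis card_Un_le)
qed

locale cdg =
  fixes V :: "'a set" and E q n
  assumes sg: "simple_graph V E" and cn: "card V = n" and cd: "cut_dense V E q" and q0: "0 < q"
begin

lemma finV: "finite V" using sg unfolding simple_graph_def by auto
lemma symE: "\<forall>a b. E a b \<longrightarrow> E b a" using sg unfolding simple_graph_def by auto
lemma irr: "\<not> E x x" using sg unfolding simple_graph_def by auto

lemma cut: "B \<subseteq> V \<Longrightarrow> q * card B * card (V - B) \<le> real (\<Sum>y\<in>V - B. nb E y B)"
proof -
  assume B: "B \<subseteq> V"
  have "q * card B * card (V - B) \<le> e_between E B (V - B)"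
    proof -
    have "B \<union> (V - B) = V" "B \<inter> (V - B) = {}" using B by auto
    then show ?thesis using cd unfolding cut_dense_def by blast
  qed
  also have "e_between E B (V - B) = (\<Sum>a\<in>B. nb E a (V - B))"
    using B finV by (intro eb) (auto intro: finite_subset)
  also have "\<dots> = (\<Sum>y\<in>V - B. nb E y B)"
    using B finV symE by (intro dc) (auto intro: finite_subset)
  finally show ?thesis .
qed

lemma deg: assumes "x \<in> V" shows "q * (real n - 1) \<le> nb E x V"
proof -
  have "q * card {x} * card (V - {x}) \<le> real (\<Sum>y\<in>V - {x}. nb E y {x})" using assms by (intro cut) auto
  moreover have "(\<Sum>y\<in>V - {x}. nb E y {x}) = (\<Sum>a\<in>{x}. nb E a (V - {x}))" using dc[of "{x}" "V - {x}" E] finV symE by auto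
  moreover have "\<dots> = nb E x (V - {x})" by simp
  moreover have "\<dots> = nb E x V" proof -
    have "{y \<in> V - {x}. E x y} = {y \<in> V. E x y}" using irr by auto
    then show ?thesis unfolding nb_def by simp
  qed
  moreover have "n \<ge> 1" using assms cn finV by (metis One_nat_def Suc_leI card_gt_0_iff empty_iff)
  ultimately show ?thesis using assms cn finV by (simp add: card_Diff_singleton of_nat_diff)
qed

lemma sub_fin: "S \<subseteq> V \<Longrightarrow> finite S" using finV finite_subset by auto

lemma card_le_n: "S \<subseteq> V \<Longrightarrow> card S \<le> n" using finV cn card_mono by metis

lemma size_lem:
  assumes SV: "S \<subseteq> V"
  shows "real (card S) * (q * (real n - 1)) \<le> real (card {y\<in>V. M \<le> nb E y S}) * card S + real M * n"
proof -
  define N where "N = {y\<in>V. M \<le> nb E y S}"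
  have NV: "N \<subseteq> V" unfolding N_def by auto
  have fS: "finite S" using SV sub_fin by auto
  have "real (card S) * (q * (real n - 1)) = (\<Sum>x\<in>S. q * (real n - 1))" by simp
  also have "\<dots> \<le> (\<Sum>x\<in>S. real (nb E x V))" using deg SV by (intro sum_mono) auto
  also have "\<dots> = real (\<Sum>x\<in>S. nb E x V)" by simp
  also have "(\<Sum>x\<in>S. nb E x V) = (\<Sum>y\<in>V. nb E y S)" using dc fS finV symE by auto
  also have "\<dots> = (\<Sum>y\<in>V - N. nb E y S) + (\<Sum>y\<in>N. nb E y S)"
    using NV finV by (intro sum.subset_diff)
  also have "(\<Sum>y\<in>N. nb E y S) \<le> card N * card S"
  proof -
    have "\<And>y. nb E y S \<le> card S" using nb_le[OF fS] by blast
    then show ?thesis using sum_bounded_above[of N "\<lambda>y. nb E y S" "card S"] by simp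
  qed
  also have "(\<Sum>y\<in>V - N. nb E y S) \<le> card (V - N) * M"
    using sum_bounded_above[of "V - N" "\<lambda>y. nb E y S" M] unfolding N_def by fastforce
  also have "card (V - N) * M \<le> n * M" using card_le_n[of "V - N"] by auto
  finally show ?thesis unfolding N_def by (simp add: algebra_simps)
qed

lemma loss_lem:
  assumes SV: "S \<subseteq> V" and S'_def: "S' = {y\<in>V. M \<le> nb E y S}"
  shows "real (card {x\<in>S. nb E x S' < M}) * (q * (real n - 1) - M) \<le> real M * n"
proof -
  define Ls where "Ls = {x\<in>S. nb E x S' < M}"
  have S'V: "S' \<subseteq> V" unfolding S'_def by auto
  have fS: "finite S" using SV sub_fin by auto
  have fL: "finite Ls" using fS unfolding Ls_def by auto
  have d: "q * (real n - 1) - M \<le> real (nb E x (V - S'))" if x: "x \<in> Ls" for x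
  proof -
    have xV: "x \<in> V" using x SV unfolding Ls_def by auto
    have "nb E x V = nb E x S' + nb E x (V - S')" using nb_split[OF finV S'V] by auto
    moreover have "nb E x S' < M" using x unfolding Ls_def by auto
    ultimately show ?thesis using deg[OF xV] by linarith
  qed
  have "real (card Ls) * (q * (real n - 1) - M) = (\<Sum>x\<in>Ls. q * (real n - 1) - M)" by simp
  also have "\<dots> \<le> (\<Sum>x\<in>Ls. real (nb E x (V - S')))" using d by (intro sum_mono) auto
  also have "\<dots> = real (\<Sum>x\<in>Ls. nb E x (V - S'))" by simp
  also have "(\<Sum>x\<in>Ls. nb E x (V - S')) \<le> (\<Sum>x\<in>S. nb E x (V - S'))"
    using fS unfolding Ls_def by (intro sum_mono2) auto
  also have "(\<Sum>x\<in>S. nb E x (V - S')) = (\<Sum>y\<in>V - S'. nb E y S)" using dc[OF fS _ symE, of "V - S'"] finV by auto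
  also have "(\<Sum>y\<in>V - S'. nb E y S) \<le> card (V - S') * M"
    using sum_bounded_above[of "V - S'" "\<lambda>y. nb E y S" M] unfolding S'_def by fastforce
  also have "card (V - S') * M \<le> n * M" using card_le_n[of "V - S'"] by auto
  finally show ?thesis unfolding Ls_def by (simp add: algebra_simps)
qed

lemma nset_lem:
  assumes SV: "S \<subseteq> V" and S'_def: "S' = {y\<in>V. M \<le> nb E y S}"
  shows "q * card (S \<union> S') * card (V - (S \<union> S')) \<le> 2 * real M * n + real (card {y\<in>V - (S \<union> S'). M \<le> nb E y S'}) * n"
proof -
  define B where "B = S \<union> S'"
  define Ns where "Ns = {y\<in>V - B. M \<le> nb E y S'}"
  have S'V: "S' \<subseteq> V" unfolding S'_def by auto
  have BV: "B \<subseteq> V" using SV S'V unfolding B_def by auto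
  have fS: "finite S" using SV sub_fin by auto
  have fS': "finite S'" using S'V sub_fin by auto
  have NsV: "Ns \<subseteq> V - B" unfolding Ns_def by auto
  have "q * card B * card (V - B) \<le> real (\<Sum>y\<in>V - B. nb E y B)" using cut BV by auto
  also have "(\<Sum>y\<in>V - B. nb E y B) \<le> (\<Sum>y\<in>V - B. nb E y S + nb E y S')"
    unfolding B_def using nb_Un fS fS' by (intro sum_mono) auto
  also have "\<dots> = (\<Sum>y\<in>V - B. nb E y S) + (\<Sum>y\<in>V - B. nb E y S')" by (simp add: sum.distrib)
  also have "(\<Sum>y\<in>V - B. nb E y S) \<le> card (V - B) * M"
    using sum_bounded_above[of "V - B" "\<lambda>y. nb E y S" M] unfolding S'_def B_def by fastforce
  also have "card (V - B) * M \<le> n * M" using card_le_n[of "V - B"] by auto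
  also have "(\<Sum>y\<in>V - B. nb E y S') = (\<Sum>y\<in>V - B - Ns. nb E y S') + (\<Sum>y\<in>Ns. nb E y S')"
    using NsV finV by (intro sum.subset_diff) auto
  also have "(\<Sum>y\<in>Ns. nb E y S') \<le> card Ns * n"
  proof -
    have "\<And>y. nb E y S' \<le> n" using nb_le[OF fS'] card_le_n[OF S'V] le_trans by blast
    then show ?thesis using sum_bounded_above[of Ns "\<lambda>y. nb E y S'" n] by simp
  qed
  also have "(\<Sum>y\<in>V - B - Ns. nb E y S') \<le> card (V - B - Ns) * M"
    using sum_bounded_above[of "V - B - Ns" "\<lambda>y. nb E y S'" M] unfolding Ns_def by fastforce
  also have "card (V - B - Ns) * M \<le> n * M" using card_le_n[of "V - B - Ns"] by auto
  finally show ?thesis unfolding Ns_def B_def by (simp add: algebra_simps)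
qed

end


locale cdg2 = cdg V E q n for V :: "'a set" and E q n +
  fixes M :: nat and U :: "'a set" and L :: nat
  assumes UV: "U \<subseteq> V" and LU: "L \<le> card U" and M1: "1 \<le> M" and q1: "q \<le> 1"
    and hL: "4 * real M \<le> q * real L" and hn: "200 * real M \<le> q^4 * real n"
begin

abbreviation S where "S k \<equiv> lev V E M U k"

lemma SV: "S k \<subseteq> V" using lev_sub UV by blast

lemma qpow: "q^4 \<le> q^3" "q^3 \<le> q^2" "q^2 \<le> q" "q^4 \<le> 1" "0 < q^4"
proof -
  show "q^4 \<le> q^3" using power_decreasing[of 3 4 q] q0 q1 by simp
  show "q^3 \<le> q^2" using power_decreasing[of 2 3 q] q0 q1 by simp
  show "q^2 \<le> q" using power_decreasing[of 1 2 q] q0 q1 by simp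
  show "q^4 \<le> 1" using q0 q1 by (simp add: power_le_one)
  show "0 < q^4" using q0 by simp
qed

lemma n200: "200 \<le> real n"
proof -
  have "200 * 1 \<le> q^4 * real n" using hn M1 by (smt (verit) of_nat_1 of_nat_mono mult_left_mono)
  also have "\<dots> \<le> 1 * real n" using qpow by (intro mult_right_mono) auto
  finally show ?thesis by simp
qed

lemma qn_big: "200 * real M \<le> q * real n" "200 * real M \<le> q^2 * real n" "200 * real M \<le> q^3 * real n"
proof -
  have a: "q^4 * real n \<le> q^3 * real n" "q^3 * real n \<le> q^2 * real n" "q^2 * real n \<le> q * real n"
    using qpow by (auto intro: mult_right_mono)
  show "200 * real M \<le> q * real n" "200 * real M \<le> q^2 * real n" "200 * real M \<le> q^3 * real n"
    using hn a by linarith+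
qed

lemma grow_gen:
  assumes SV': "T \<subseteq> V" and hT: "4 * real M \<le> q * card T"
  shows "q * real n / 2 \<le> card {y\<in>V. M \<le> nb E y T}"
proof -
  define N where "N = real (card {y\<in>V. M \<le> nb E y T})"
  have sz: "real (card T) * (q * (real n - 1)) \<le> N * card T + real M * n"
    using size_lem[OF SV'] unfolding N_def by simp
  have pos: "0 < real (card T)"
  proof -
    have "0 < 4 * real M" using M1 by simp
    then have "0 < q * card T" using hT by linarith
    then show ?thesis using q0 by (simp add: zero_less_mult_iff)
  qed
  have "(4 * real M) * n \<le> (q * card T) * n" using hT by (intro mult_right_mono) auto
  then have "real (card T) * (q * (real n - 1)) \<le> real (card T) * (N + q * n / 4)"
    using sz by (simp add: algebra_simps)
  then have "q * (real n - 1) \<le> N + q * n / 4" using pos by (simp add: mult_le_cancel_left)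
  moreover have "q * 4 \<le> q * real n" using n200 q0 by (intro mult_left_mono) auto
  ultimately show ?thesis unfolding N_def by (simp add: algebra_simps)
qed

lemma Sbig: "1 \<le> k \<Longrightarrow> q * real n / 2 \<le> card (S k)"
proof (induction k)
  case 0 then show ?case by simp
next
  case (Suc k)
  have "4 * real M \<le> q * card (S k)"
  proof (cases k)
    case 0
    have "q * real L \<le> q * card U" using LU q0 by (intro mult_left_mono) auto
    then show ?thesis using hL 0 by simp
  next
    case (Suc k')
    then have "q * real n / 2 \<le> card (S k)" using Suc.IH by simp
    then have "q * (q * real n / 2) \<le> q * card (S k)" using q0 by (intro mult_left_mono) auto
    moreover have "q * (q * real n / 2) = q^2 * real n / 2" by (simp add: power2_eq_square)
    ultimately show ?thesis using qn_big(2) by linarith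
  qed
  then show ?case using grow_gen[OF SV] by simp
qed

definition Ls where "Ls k = {x \<in> S k. nb E x (S (Suc k)) < M}"

lemma Ls_bound: "q * card (Ls k) \<le> 2 * real M"
proof -
  have l: "real (card (Ls k)) * (q * (real n - 1) - M) \<le> real M * n"
    using loss_lem[OF SV, of "S (Suc k)" M k] unfolding Ls_def by simp
  have "q * real n / 2 \<le> q * (real n - 1) - M" using qn_big(1) q1 M1 by (simp add: algebra_simps)
  then have "real (card (Ls k)) * (q * real n / 2) \<le> real M * n"
    using l by (meson mult_left_mono of_nat_0_le_iff order_trans)
  then have "real n * (q * card (Ls k)) \<le> real n * (2 * real M)" by (simp add: algebra_simps)
  moreover have "0 < real n" using n200 by simp
  ultimately show ?thesis by (simp add: mult_le_cancel_left)
qed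

definition B where "B k = S k \<union> S (Suc k)"

lemma BV: "B k \<subseteq> V" unfolding B_def using SV by auto

lemma step:
  assumes big: "q * real n / 2 \<le> card (V - B k)"
  shows "card (B k) + q^3 * real n / 5 \<le> card (B (Suc (Suc k)))"
proof -
  define Ns where "Ns = {y\<in>V - B k. M \<le> nb E y (S (Suc k))}"
  have ns: "q * card (B k) * card (V - B k) \<le> 2 * real M * n + real (card Ns) * n"
    using nset_lem[OF SV, of "S (Suc k)" M k] unfolding Ns_def B_def by simp
  have cB: "q * real n / 2 \<le> card (B k)"
  proof -
    have "card (S (Suc k)) \<le> card (B k)" unfolding B_def using finV SV
      by (intro card_mono) (auto intro: finite_subset)
    then show ?thesis using Sbig[of "Suc k"] by linarith
  qed
  have "q * (q * real n / 2) * (q * real n / 2) \<le> q * card (B k) * card (V - B k)"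
    using cB big q0 n200 by (intro mult_mono) auto
  moreover have "q * (q * real n / 2) * (q * real n / 2) = real n * (q^3 * real n / 4)"
    by (simp add: power3_eq_cube algebra_simps)
  ultimately have A: "real n * (q^3 * real n / 4) \<le> q * card (B k) * card (V - B k)" by linarith
  have "real n * (2 * real M + card Ns) = 2 * real M * n + real (card Ns) * n" by (simp add: algebra_simps)
  then have "real n * (q^3 * real n / 4) \<le> real n * (2 * real M + card Ns)"
    using A ns by linarith
  then have cNs: "q^3 * real n / 4 \<le> 2 * real M + card Ns" using n200 by (simp add: mult_le_cancel_left)
  define LL where "LL = Ls k \<union> Ls (Suc k)"
  have cLL: "q * card LL \<le> 4 * real M"
  proof -
    have "card LL \<le> card (Ls k) + card (Ls (Suc k))" unfolding LL_def by (rule card_Un_le)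
    then have "q * card LL \<le> q * card (Ls k) + q * card (Ls (Suc k))"
      using q0 by (metis distrib_left mult_left_mono of_nat_add of_nat_le_iff less_imp_le)
    then show ?thesis using Ls_bound[of k] Ls_bound[of "Suc k"] by linarith
  qed
  have sub: "(B k - LL) \<union> Ns \<subseteq> B (Suc (Suc k))"
  proof
    fix x assume x: "x \<in> (B k - LL) \<union> Ns"
    show "x \<in> B (Suc (Suc k))"
    proof (cases "x \<in> Ns")
      case True then show ?thesis unfolding Ns_def B_def by auto
    next
      case False
      then have "x \<in> S k - Ls k \<or> x \<in> S (Suc k) - Ls (Suc k)" using x unfolding B_def LL_def by auto
      then show ?thesis
      proof
        assume "x \<in> S k - Ls k"
        then have "x \<in> V" "M \<le> nb E x (S (Suc k))" using SV[of k] unfolding Ls_def by auto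
        then show ?thesis unfolding B_def by simp
      next
        assume "x \<in> S (Suc k) - Ls (Suc k)"
        then have "x \<in> V" "M \<le> nb E x (S (Suc (Suc k)))" using SV[of "Suc k"] unfolding Ls_def by auto
        then show ?thesis unfolding B_def by simp
      qed
    qed
  qed
  have fB: "finite (B k)" using BV finV finite_subset by blast
  have fNs: "finite Ns" unfolding Ns_def using finV by auto
  have "card ((B k - LL) \<union> Ns) \<le> card (B (Suc (Suc k)))"
    using sub BV finV by (intro card_mono) (auto intro: finite_subset)
  moreover have "card ((B k - LL) \<union> Ns) = card (B k - LL) + card Ns"
    using fB fNs unfolding Ns_def by (intro card_Un_disjoint) auto
  moreover have "card (B k) \<le> card (B k - LL) + card LL"
  proof -
    have "LL \<subseteq> B k" unfolding LL_def Ls_def B_def by auto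
    then have "card (B k) = card ((B k - LL) \<union> LL)" by (simp add: Un_absorb2)
    also have "\<dots> \<le> card (B k - LL) + card LL" by (rule card_Un_le)
    finally show ?thesis .
  qed
  ultimately have c: "real (card (B k)) + card Ns \<le> card (B (Suc (Suc k))) + card LL" by linarith
  have "q * card (B k) + q * (q^3 * real n / 4 - 2 * real M) \<le> q * card (B (Suc (Suc k))) + 4 * real M"
  proof -
    have "q * (q^3 * real n / 4 - 2 * real M) \<le> q * card Ns" using cNs q0 by (intro mult_left_mono) auto
    moreover have "q * (real (card (B k)) + card Ns) \<le> q * (card (B (Suc (Suc k))) + card LL)"
      using c q0 by (intro mult_left_mono) auto
    ultimately show ?thesis using cLL by (simp add: algebra_simps)
  qed
  moreover have "q * (q^3 * real n / 4 - 2 * real M) = q^4 * real n / 4 - 2 * q * real M"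
    by (simp add: algebra_simps power_numeral_reduce)
  moreover have "q * real M \<le> real M" using mult_left_le_one_le[of "real M" q] q0 q1 by simp
  ultimately have "q * card (B k) + q * (q^3 * real n / 5) \<le> q * card (B (Suc (Suc k)))"
    using hn by (simp add: algebra_simps power_numeral_reduce)
  then have "q * (card (B k) + q^3 * real n / 5) \<le> q * card (B (Suc (Suc k)))" by (simp add: algebra_simps)
  then show ?thesis using q0 by (simp add: mult_le_cancel_left)
qed

lemma done_lem:
  assumes sm: "card (V - B k) < q * real n / 2" and v: "v \<in> V"
  shows "v \<in> S (Suc k) \<or> v \<in> S (Suc (Suc k))"
proof (rule ccontr)
  assume "\<not> ?thesis"
  then have a: "nb E v (S k) < M" "nb E v (S (Suc k)) < M" using v by auto
  have fB: "finite (B k)" using BV finV finite_subset by blast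
  have "nb E v V = nb E v (B k) + nb E v (V - B k)" using nb_split[OF finV BV] by auto
  moreover have "nb E v (B k) \<le> nb E v (S k) + nb E v (S (Suc k))" unfolding B_def
    using nb_Un SV finV finite_subset by metis
  moreover have "nb E v (V - B k) \<le> card (V - B k)" using nb_le[of "V - B k" E v] finV by simp
  ultimately have "real (nb E v V) \<le> real (2 * M - 2) + card (V - B k)" using a by linarith
  then have "q * (real n - 1) < 2 * real M - 2 + q * real n / 2" using deg[OF v] sm M1 by linarith
  then show False using qn_big(1) q1 by (simp add: algebra_simps)
qed

lemma iter: "(\<forall>j<J. q * real n / 2 \<le> card (V - B (2*j))) \<Longrightarrow> real J * (q^3 * real n / 5) \<le> card (B (2*J))"
proof (induction J)
  case 0 then show ?case by simp
next
  case (Suc J)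
  then have "real J * (q^3 * real n / 5) \<le> card (B (2*J))" by auto
  moreover have "card (B (2*J)) + q^3 * real n / 5 \<le> card (B (Suc (Suc (2*J))))"
    using Suc.prems by (intro step) auto
  ultimately show ?case by (simp add: algebra_simps)
qed

lemma reach:
  assumes v: "v \<in> V"
  shows "\<exists>h. h \<le> 2 * (nat \<lfloor>5 / q^3\<rfloor> + 1) \<and> v \<in> S h"
proof -
  define J0 where "J0 = nat \<lfloor>5 / q^3\<rfloor> + 1"
  have "5 / q^3 < real J0"
  proof -
    have x0: "0 \<le> 5 / q^3" using q0 by simp
    then have "0 \<le> \<lfloor>5 / q^3\<rfloor>" by simp
    then have "real (nat \<lfloor>5 / q^3\<rfloor>) = real_of_int \<lfloor>5 / q^3\<rfloor>" by simp
    moreover have "5 / q^3 < real_of_int \<lfloor>5 / q^3\<rfloor> + 1" by (rule real_of_int_floor_add_one_gt)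
    moreover have "real J0 = real (nat \<lfloor>5 / q^3\<rfloor>) + 1" unfolding J0_def by simp
    ultimately show ?thesis by linarith
  qed
  then have J0q: "5 < real J0 * q^3" using qpow q0 by (simp add: divide_less_eq)
  have "\<exists>j<J0. card (V - B (2*j)) < q * real n / 2"
  proof (rule ccontr)
    assume nx: "\<not> (\<exists>j<J0. card (V - B (2*j)) < q * real n / 2)"
    have all: "\<forall>j<J0. q * real n / 2 \<le> card (V - B (2*j))"
    proof (intro allI impI)
      fix j assume "j < J0" then show "q * real n / 2 \<le> card (V - B (2*j))" using nx by force
    qed
    then have "real J0 * (q^3 * real n / 5) \<le> card (B (2*J0))" by (rule iter)
    moreover have "card (B (2*J0)) \<le> n" using card_le_n BV by auto
    moreover have "real n < real J0 * (q^3 * real n / 5)"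
    proof -
      have "5 * real n < (real J0 * q^3) * real n" using J0q n200 by (intro mult_strict_right_mono) auto
      then show ?thesis by (simp add: algebra_simps)
    qed
    ultimately show False by linarith
  qed
  then obtain j where j: "j < J0" "card (V - B (2*j)) < q * real n / 2" by auto
  from done_lem[OF j(2) v] have "v \<in> S (Suc (2*j)) \<or> v \<in> S (Suc (Suc (2*j)))" .
  then have "\<exists>h. h \<le> 2 * J0 \<and> v \<in> S h"
  proof
    assume a: "v \<in> S (Suc (2*j))"
    have "Suc (2*j) \<le> 2 * J0" using j(1) by simp
    then show ?thesis using a by (intro exI[of _ "Suc (2*j)"] conjI)
  next
    assume a: "v \<in> S (Suc (Suc (2*j)))"
    have "Suc (Suc (2*j)) \<le> 2 * J0" using j(1) by simp
    then show ?thesis using a by (intro exI[of _ "Suc (Suc (2*j))"] conjI)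
  qed
  then show ?thesis unfolding J0_def .
qed

end

lemma ceil_ge: "0 \<le> x \<Longrightarrow> x \<le> real (nat \<lceil>x\<rceil>)"
  by linarith

lemma subtr_perfect: "subtr V E D h D v U T par dep \<Longrightarrow> perfect_tree_in V E D h v U T par dep"
  unfolding subtr_def perfect_tree_in_def by blast

theorem lemma7p2:
  fixes \<Delta> :: nat and q :: real
  assumes "\<Delta> \<ge> 1" and "0 < q" and "q \<le> 1"
  shows "\<exists>L0::nat. \<forall>L\<ge>L0. \<exists>n0::nat. \<forall>n\<ge>n0.
     \<forall>(V::'a set) E v U.
       simple_graph V E \<and> card V = n \<and> cut_dense V E q \<and>
       v \<in> V \<and> U \<subseteq> V \<and> card U \<ge> L \<longrightarrow>
       (\<exists>h T par dep. real h \<le> 19 / q ^ 4 \<and> perfect_tree_in V E \<Delta> h v U T par dep)"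
proof -
  note D1 = assms(1) and q0 = assms(2) and q1 = assms(3)
  define J0 where "J0 = nat \<lfloor>5 / q^3\<rfloor> + 1"
  define H where "H = 2 * J0"
  define M where "M = (\<Delta> + 1) ^ H"
  define L0 where "L0 = nat \<lceil>4 * real M / q\<rceil>"
  have M1: "1 \<le> M" unfolding M_def by simp
  have hbound: "real h \<le> 19 / q^4" if "h \<le> H" for h
  proof -
    define X where "X = real (nat \<lfloor>5 / q^3\<rfloor>)"
    define Y where "Y = 5 / q^3"
    define Z where "Z = 1 / q^4"
    have r: "X \<le> Y"
    proof -
      have "0 \<le> 5 / q^3" using q0 by simp
      then show ?thesis unfolding X_def Y_def by linarith
    qed
    have hH: "real h \<le> real H" using that by simp
    have HH: "real H = 2 * (X + 1)" unfolding H_def J0_def X_def by simp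
    have YZ: "Y \<le> 5 * Z" unfolding Y_def Z_def
      using q0 q1 power_decreasing[of 3 4 q] by (simp add: divide_left_mono)
    have Z1: "1 \<le> Z" unfolding Z_def using q0 q1 by (simp add: power_le_one)
    have e: "19 / q^4 = 19 * Z" unfolding Z_def by simp
    have "real h \<le> 2 * (X + 1)" using hH HH by simp
    also have "\<dots> \<le> 2 * (Y + 1)" using r by simp
    also have "\<dots> \<le> 2 * (5 * Z + 1)" using YZ by simp
    also have "\<dots> \<le> 19 * Z" using Z1 by simp
    finally have "real h \<le> 19 * Z" .
    then show ?thesis using e by simp
  qed
  show ?thesis
  proof (rule exI[of _ L0], intro allI impI)
    fix L :: nat assume L: "L0 \<le> L"
    define n0 where "n0 = nat \<lceil>200 * real M / q^4\<rceil>"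
    show "\<exists>n0::nat. \<forall>n\<ge>n0. \<forall>(V::'a set) E v U.
       simple_graph V E \<and> card V = n \<and> cut_dense V E q \<and>
       v \<in> V \<and> U \<subseteq> V \<and> card U \<ge> L \<longrightarrow>
       (\<exists>h T par dep. real h \<le> 19 / q ^ 4 \<and> perfect_tree_in V E \<Delta> h v U T par dep)"
    proof (rule exI[of _ n0], intro allI impI)
      fix n :: nat and V :: "'a set" and E v U
      assume n: "n0 \<le> n"
      assume A: "simple_graph V E \<and> card V = n \<and> cut_dense V E q \<and> v \<in> V \<and> U \<subseteq> V \<and> L \<le> card U"
      have hL: "4 * real M \<le> q * real L"
      proof -
        have "4 * real M / q \<le> real L0" unfolding L0_def using q0 by (intro ceil_ge) simp
        also have "\<dots> \<le> real L" using L by simp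
        finally show ?thesis using q0 by (simp add: divide_le_eq mult.commute)
      qed
      have hn: "200 * real M \<le> q^4 * real n"
      proof -
        have "200 * real M / q^4 \<le> real n0" unfolding n0_def using q0 by (intro ceil_ge) simp
        also have "\<dots> \<le> real n" using n by simp
        finally show ?thesis using q0 by (simp add: divide_le_eq mult.commute)
      qed
      interpret cdg2 V E q n M U L
        using A hL hn M1 q0 q1 by unfold_locales auto
      obtain h where h: "h \<le> H" "v \<in> lev V E M U h" using reach[of v] A unfolding H_def J0_def by auto
      have "(\<Delta>+1)^h \<le> M" unfolding M_def using h(1) by (intro power_increasing) auto
      then have "\<exists>T par dep. subtr V E \<Delta> h \<Delta> v U T par dep \<and> finite T \<and> T \<inter> {} = {} \<and> card T \<le> (\<Delta>+1)^h"
        using embed[OF sg UV D1, of M h, rule_format, of \<Delta> v "{}"] h(2) by simp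
      then obtain T par dep where T: "subtr V E \<Delta> h \<Delta> v U T par dep" by blast
      show "\<exists>h T par dep. real h \<le> 19 / q ^ 4 \<and> perfect_tree_in V E \<Delta> h v U T par dep"
        by (intro exI conjI, rule hbound[OF h(1)], rule subtr_perfect[OF T])
    qed
  qed
qed

end
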